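(* Let $d \geq 2$ and let $\hat{\mathbf{\Sigma}}_1,\ldots,\hat{\mathbf{\Sigma}}_K \in \mathbb{R}^{d\times d}$ be symmetric positive semi-definite matrices such that \[ \lambda_1(\hat{\mathbf{\Sigma}}_j) \geq \frac{\sum_{k=1}^K\sum_{i=2}^d \lambda_i(\hat{\mathbf{\Sigma}}_k)}{K(d-1)} \quad \text{for all } j\in\{1,\ldots,K\}. \] Then a solution of \[ \min_{\hat{\mathbf{x}}_1,\ldots,\hat{\mathbf{x}}_K \in \mathbb{R}^d,\ \hat{\sigma}^2} \ \sum_{k=1}^K \big\|\hat{\mathbf{\Sigma}}_k - (\hat{\mathbf{x}}_k\hat{\mathbf{x}}_k^\mathrm{T} + \hat{\sigma}^2 \mathbf{I})\big\|_\mathrm{F}^2 \] is given by \[ \sigma^2_{\mathrm{GMM}} = \frac{1}{K}\sum_{k=1}^K \frac{\mathrm{tr}(\hat{\mathbf{\Sigma}}_k) - \lambda_1(\hat{\mathbf{\Sigma}}_k)}{d-1},\qquad \mathbf{x}_{\mathrm{GMM},k} = \sqrt{\lambda_1(\hat{\mathbf{\Sigma}}_k) - \sigma^2_{\mathrm{GMM}}}\ \mathbf{v}_1(\hat{\mathbf{\Sigma}}_k)\quad (k=1,\ldots,K), \] where $\mathbf{v}_1(\hat{\mathbf{\Sigma}}_k)$ is a unit eigenvector associated with $\lambda_1(\hat{\mathbf{\Sigma}}_k)$.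
   Context: $\lambda_i(\mathbf{M})$ denotes the $i$-th largest eigenvalue of a symmetric positive semi-definite matrix $\mathbf{M}$ (equal to its $i$-th largest singular value); $\mathbf{I}$ is the $d\times d$ identity; $\|\cdot\|_\mathrm{F}$ is the Frobenius norm. *)

theory Defs
  imports "Jordan_Normal_Form.Matrix" "Jordan_Normal_Form.Char_Poly"
          "HOL-Computational_Algebra.Polynomial"
begin

definition mat_trace :: "real mat \<Rightarrow> real" where
  "mat_trace A = (\<Sum>i<dim_row A. A $$ (i, i))"

definition frob_sq :: "real mat \<Rightarrow> real" where
  "frob_sq A = (\<Sum>i<dim_row A. \<Sum>j<dim_col A. (A $$ (i, j))^2)"

definition eig_list :: "real mat \<Rightarrow> real list" where
  "eig_list A = rev (sorted_list_of_multiset (proots (char_poly A)))"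

text \<open>lambda_i(A), the i-th largest eigenvalue, 1-based index i.\<close>
definition eig :: "real mat \<Rightarrow> nat \<Rightarrow> real" where
  "eig A i = eig_list A ! (i - 1)"

definition symmetric_mat :: "real mat \<Rightarrow> bool" where
  "symmetric_mat A \<longleftrightarrow> transpose_mat A = A"

definition psd_mat :: "real mat \<Rightarrow> bool" where
  "psd_mat A \<longleftrightarrow> (\<forall>v \<in> carrier_vec (dim_row A). 0 \<le> v \<bullet> (A *\<^sub>v v))"

definition outer :: "real vec \<Rightarrow> real mat" where
  "outer x = mat (dim_vec x) (dim_vec x) (\<lambda>(i, j). x $ i * x $ j)"

definition gmm_obj :: "nat \<Rightarrow> nat \<Rightarrow> (nat \<Rightarrow> real mat) \<Rightarrow> (nat \<Rightarrow> real vec) \<Rightarrow> real \<Rightarrow> real" where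
  "gmm_obj d K S x s = (\<Sum>k<K. frob_sq (S k - (outer (x k) + s \<cdot>\<^sub>m 1\<^sub>m d)))"

end

theory Submission
  imports Defs "Jordan_Normal_Form.Schur_Decomposition"
begin


lemma sym_real_eigenvalue:
  fixes S :: "real mat"
  assumes S: "S \<in> carrier_mat n n" and sym: "transpose_mat S = S" and n: "n > 0"
  shows "\<exists>\<mu>. eigenvalue S \<mu>"
proof -
  define C where "C = map_mat complex_of_real S"
  have C: "C \<in> carrier_mat n n" using S by (simp add: C_def)
  obtain as where cp: "char_poly C = (\<Prod>a\<leftarrow>as. [:- a, 1:])" and len: "length as = n"
    using char_poly_factorized[OF C] by blast
  obtain z where z: "z \<in> set as" using len n by (cases as) auto
  have "poly (char_poly C) z = 0" unfolding cp using z
    by (simp add: poly_prod_list prod_list_zero_iff)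
  hence "eigenvalue C z" using eigenvalue_root_char_poly[OF C] by simp
  then obtain w where ev: "eigenvector C w z" unfolding eigenvalue_def by blast
  hence w: "w \<in> carrier_vec n" and w0: "w \<noteq> 0\<^sub>v n" and Cw: "C *\<^sub>v w = z \<cdot>\<^sub>v w"
    unfolding eigenvector_def using C by auto
  define s where "s = (\<Sum>i<n. \<Sum>j<n. cnj (w $ i) * complex_of_real (S $$ (i,j)) * w $ j)"
  define N where "N = (\<Sum>i<n. w $ i * cnj (w $ i))"
  have sN: "s = z * N"
  proof -
    have Cwi: "(C *\<^sub>v w) $ i = (\<Sum>j<n. complex_of_real (S $$ (i,j)) * w $ j)" if "i < n" for i
      using that S w by (simp add: C_def mult_mat_vec_def scalar_prod_def atLeast0LessThan)
    have "s = (\<Sum>i<n. cnj (w $ i) * (C *\<^sub>v w) $ i)"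
      unfolding s_def by (simp add: Cwi sum_distrib_left mult.assoc)
    also have "\<dots> = z * N" unfolding Cw N_def using w
      by (auto simp: sum_distrib_left mult.commute intro!: sum.cong)
    finally show ?thesis .
  qed
  have "cnj s = (\<Sum>i<n. \<Sum>j<n. w $ i * complex_of_real (S $$ (i,j)) * cnj (w $ j))"
    unfolding s_def by (simp add: cnj_sum)
  also have "\<dots> = (\<Sum>j<n. \<Sum>i<n. w $ i * complex_of_real (S $$ (i,j)) * cnj (w $ j))"
    by (rule sum.swap)
  also have "\<dots> = s" unfolding s_def
  proof (intro sum.cong refl)
    fix i j assume "i \<in> {..<n}" "j \<in> {..<n}"
    hence "S $$ (j, i) = S $$ (i, j)" using sym S
      by (metis carrier_matD index_transpose_mat(1) lessThan_iff)
    thus "w $ j * complex_of_real (S $$ (j, i)) * cnj (w $ i) = cnj (w $ i) * complex_of_real (S $$ (i, j)) * w $ j"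
      by simp
  qed
  finally have "cnj s = s" .
  hence Ims: "Im s = 0" by (metis Reals_cnj_iff complex_is_Real_iff)
  have NR: "N = complex_of_real (\<Sum>i<n. (cmod (w $ i))^2)"
    unfolding N_def of_real_sum complex_norm_square ..
  obtain i where i: "i < n" "w $ i \<noteq> 0" using w w0 by (metis eq_vecI carrier_vecD index_zero_vec)
  have "(\<Sum>i<n. (cmod (w $ i))^2) > 0"
  proof -
    have "(cmod (w $ i))^2 > 0" using i by simp
    moreover have "(cmod (w $ i))^2 \<le> (\<Sum>i<n. (cmod (w $ i))^2)"
      by (rule member_le_sum) (use i in auto)
    ultimately show ?thesis by linarith
  qed
  moreover have "Im s = Im z * (\<Sum>i<n. (cmod (w $ i))^2)" unfolding sN NR by simp
  ultimately have Imz: "Im z = 0" using Ims by simp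
  define r where "r = Re z"
  have zr: "z = complex_of_real r" using Imz unfolding r_def by (simp add: complex_eq_iff)
  have "char_poly C = map_poly complex_of_real (char_poly S)"
    unfolding C_def by (rule of_real_hom.char_poly_hom[OF S])
  hence "complex_of_real (poly (char_poly S) r) = 0"
    using \<open>poly (char_poly C) z = 0\<close> zr by (metis of_real_hom.poly_map_poly)
  hence "poly (char_poly S) r = 0" by simp
  thus ?thesis using eigenvalue_root_char_poly[OF S] by blast
qed



definition diag_m :: "real list \<Rightarrow> real mat" where
  "diag_m ds = mat (length ds) (length ds) (\<lambda>(i,j). if i = j then ds ! i else 0)"

lemma orthonormal_completion:
  fixes u :: "real vec"
  assumes u: "u \<in> carrier_vec n" and uu: "u \<bullet> u = 1"
  shows "\<exists>W. W \<in> carrier_mat n n \<and> transpose_mat W * W = 1\<^sub>m n \<and> (n > 0 \<longrightarrow> col W 0 = u)"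
proof -
  interpret cof_vec_space n "TYPE(real)" .
  have u0: "u \<noteq> 0\<^sub>v n" using uu u by auto
  note bc = basis_completion[OF u u0]
  define b where "b = basis_completion u"
  define ws where "ws = gram_schmidt n b"
  have gs: "corthogonal ws" "set ws \<subseteq> carrier_vec n" "length ws = n"
    using gram_schmidt_result[OF bc(2) bc(4) bc(5) ws_def[unfolded b_def]] bc(6) unfolding b_def by auto
  define ws' where "ws' = map (\<lambda>w. (1 / sqrt (w \<bullet> w)) \<cdot>\<^sub>v w) ws"
  have len': "length ws' = n" using gs by (simp add: ws'_def)
  have car': "ws' ! i \<in> carrier_vec n" if "i < n" for i
    using gs that by (auto simp: ws'_def)
  have pos: "ws ! i \<bullet> ws ! i > 0" if "i < n" for i
  proof -
    have "ws ! i \<bullet> ws ! i \<noteq> 0" using corthogonalD[OF gs(1), of i i] gs(3) that by simp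
    moreover have "ws ! i \<bullet> ws ! i \<ge> 0" by (simp add: scalar_prod_def power2_eq_square[symmetric] sum_nonneg)
    ultimately show ?thesis by simp
  qed
  have orth: "ws' ! i \<bullet> ws' ! j = (if i = j then 1 else 0)" if "i < n" "j < n" for i j
  proof -
    have ci: "ws ! i \<in> carrier_vec n" and cj: "ws ! j \<in> carrier_vec n" using gs that by auto
    have "ws' ! i \<bullet> ws' ! j = (1 / sqrt (ws!i \<bullet> ws!i)) * (1 / sqrt (ws!j \<bullet> ws!j)) * (ws ! i \<bullet> ws ! j)"
      using that gs ci cj by (simp add: ws'_def)
    also have "\<dots> = (if i = j then 1 else 0)"
    proof (cases "i = j")
      case True
      with pos[OF that(1)] show ?thesis
        by (simp add: field_simps)
    next
      case False
      hence "ws ! i \<bullet> ws ! j = 0" using corthogonalD[OF gs(1), of i j] gs(3) that by simp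
      thus ?thesis using False by simp
    qed
    finally show ?thesis .
  qed
  define W where "W = mat_of_cols n ws'"
  have W: "W \<in> carrier_mat n n" unfolding W_def using len' mat_of_cols_carrier(1)[of n ws'] by simp
  have colW: "col W i = ws' ! i" if "i < n" for i
    unfolding W_def using col_mat_of_cols[of i ws' n] len' car' that by simp
  have WW: "transpose_mat W * W = 1\<^sub>m n"
    by (rule eq_matI, insert W colW orth, auto)
  have "n > 0 \<longrightarrow> col W 0 = u"
  proof
    assume n: "n > 0"
    have "ws ! 0 = u"
    proof -
      from bc(7) bc(6) n obtain vs where "b = u # vs" unfolding b_def by (cases "basis_completion u") auto
      hence "hd ws = u" unfolding ws_def using gram_schmidt_hd[OF u] by simp
      thus ?thesis using gs(3) n by (cases ws) auto
    qed
    thus "col W 0 = u" using colW[OF n] n gs(3) uu by (simp add: ws'_def)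
  qed
  with W WW show ?thesis by blast
qed



lemma diag_m_cons:
  "four_block_mat (mat 1 1 (\<lambda>_. \<mu>)) (0\<^sub>m 1 m) (0\<^sub>m m 1) (diag_m ds) = diag_m (\<mu> # ds)"
  if "length ds = m"
  by (rule eq_matI, insert that, auto simp: diag_m_def)

lemma spectral:
  fixes S :: "real mat"
  assumes "S \<in> carrier_mat n n" and "transpose_mat S = S"
  shows "\<exists>U ds. U \<in> carrier_mat n n \<and> transpose_mat U * U = 1\<^sub>m n \<and> length ds = n \<and>
           transpose_mat U * S * U = diag_m ds"
  using assms
proof (induction n arbitrary: S)
  case 0
  show ?case
    by (rule exI[of _ "1\<^sub>m 0"], rule exI[of _ "[]"], insert 0, auto intro!: eq_matI simp: diag_m_def)
next
  case (Suc m)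
  let ?n = "Suc m"
  have S: "S \<in> carrier_mat ?n ?n" and sym: "transpose_mat S = S" by fact+
  obtain \<mu> where "eigenvalue S \<mu>" using sym_real_eigenvalue[OF S sym] by auto
  from find_eigenvector[OF S this] have ev: "eigenvector S (find_eigenvector S \<mu>) \<mu>" .
  define v0 where "v0 = find_eigenvector S \<mu>"
  have v0: "v0 \<in> carrier_vec ?n" "v0 \<noteq> 0\<^sub>v ?n" "S *\<^sub>v v0 = \<mu> \<cdot>\<^sub>v v0"
    using ev S unfolding eigenvector_def v0_def by auto
  have v0pos: "v0 \<bullet> v0 > 0"
  proof -
    obtain i where i: "i < ?n" "v0 $ i \<noteq> 0" using v0 by (metis eq_vecI carrier_vecD index_zero_vec)
    have "(v0 $ i)^2 > 0" using i by simp
    moreover have "(v0 $ i)^2 \<le> (\<Sum>j<?n. (v0 $ j)^2)"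
      by (rule member_le_sum) (use i in auto)
    moreover have "v0 \<bullet> v0 = (\<Sum>j<?n. (v0 $ j)^2)" using v0(1)
      by (simp add: scalar_prod_def power2_eq_square atLeast0LessThan)
    ultimately show ?thesis by linarith
  qed
  define u where "u = (1 / sqrt (v0 \<bullet> v0)) \<cdot>\<^sub>v v0"
  have u: "u \<in> carrier_vec ?n" using v0 by (simp add: u_def)
  have uu: "u \<bullet> u = 1" using v0pos v0(1) by (simp add: u_def field_simps)
  have Su: "S *\<^sub>v u = \<mu> \<cdot>\<^sub>v u" using v0 S
    by (simp add: u_def mult_mat_vec smult_smult_assoc mult.commute)
  obtain W where W: "W \<in> carrier_mat ?n ?n" and WW: "transpose_mat W * W = 1\<^sub>m ?n"
    and W0: "col W 0 = u" using orthonormal_completion[OF u uu] by auto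
  define A' where "A' = transpose_mat W * S * W"
  have A': "A' \<in> carrier_mat ?n ?n" using W S by (simp add: A'_def)
  have symA': "transpose_mat A' = A'"
  proof -
    have SW: "S * W \<in> carrier_mat ?n ?n" using S W by simp
    have "transpose_mat A' = transpose_mat (transpose_mat W * (S * W))"
      using W S by (simp add: A'_def assoc_mult_mat[of _ ?n ?n])
    also have "\<dots> = transpose_mat (S * W) * W"
      using transpose_mult[of "transpose_mat W" ?n ?n "S * W" ?n] W SW by simp
    also have "\<dots> = (transpose_mat W * S) * W"
      using transpose_mult[of S ?n ?n W ?n] W S sym by simp
    finally show ?thesis unfolding A'_def .
  qed
  have A'col: "A' $$ (i, 0) = (if i = 0 then \<mu> else 0)" if "i < ?n" for i
  proof -
    have "A' $$ (i, 0) = row (transpose_mat W) i \<bullet> col (S * W) 0"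
      using that W S by (simp add: A'_def assoc_mult_mat[of _ ?n ?n])
    also have "col (S * W) 0 = S *\<^sub>v col W 0" by (rule col_mult2[OF S W], simp)
    also have "\<dots> = \<mu> \<cdot>\<^sub>v u" using W0 Su by simp
    also have "row (transpose_mat W) i \<bullet> (\<mu> \<cdot>\<^sub>v u) = \<mu> * (col W i \<bullet> col W 0)"
      using that W u W0 by simp
    also have "col W i \<bullet> col W 0 = (transpose_mat W * W) $$ (i, 0)" using that W by simp
    also have "\<dots> = (if i = 0 then 1 else 0)" using that WW by simp
    finally show ?thesis by simp
  qed
  define A3 where "A3 = mat m m (\<lambda>(i,j). A' $$ (Suc i, Suc j))"
  have A3: "A3 \<in> carrier_mat m m" by (simp add: A3_def)
  have symA3: "transpose_mat A3 = A3"
    by (rule eq_matI, insert A' symA', auto simp: A3_def) (metis index_transpose_mat(1) carrier_matD Suc_less_eq)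
  obtain U' ds' where U': "U' \<in> carrier_mat m m" and UU': "transpose_mat U' * U' = 1\<^sub>m m"
    and ds': "length ds' = m" and D': "transpose_mat U' * A3 * U' = diag_m ds'"
    using Suc.IH[OF A3 symA3] by blast
  have A'blk: "A' = four_block_mat (mat 1 1 (\<lambda>_. \<mu>)) (0\<^sub>m 1 m) (0\<^sub>m m 1) A3"
  proof (rule eq_matI)
    fix i j assume i: "i < dim_row (four_block_mat (mat 1 1 (\<lambda>_. \<mu>)) (0\<^sub>m 1 m) (0\<^sub>m m 1) A3)"
      and j: "j < dim_col (four_block_mat (mat 1 1 (\<lambda>_. \<mu>)) (0\<^sub>m 1 m) (0\<^sub>m m 1) A3)"
    hence i': "i < ?n" and j': "j < ?n" using A3 by auto
    have row0: "A' $$ (0, j) = (if j = 0 then \<mu> else 0)"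
      using A'col[OF j'] symA' A' j' by (metis index_transpose_mat(1) carrier_matD zero_less_Suc)
    show "A' $$ (i, j) = four_block_mat (mat 1 1 (\<lambda>_. \<mu>)) (0\<^sub>m 1 m) (0\<^sub>m m 1) A3 $$ (i, j)"
      using i' j' A3 A'col[OF i'] row0
      by (cases i; cases j; auto simp: A3_def)
  qed (insert A' A3, auto)
  define F where "F = four_block_mat (1\<^sub>m 1) (0\<^sub>m 1 m) (0\<^sub>m m 1) U'"
  have F: "F \<in> carrier_mat ?n ?n"
    using four_block_carrier_mat[of "1\<^sub>m 1" 1 1 U' m m "0\<^sub>m 1 m" "0\<^sub>m m 1"] U' by (simp add: F_def)
  have Ft: "transpose_mat F = four_block_mat (1\<^sub>m 1) (0\<^sub>m 1 m) (0\<^sub>m m 1) (transpose_mat U')"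
    unfolding F_def by (subst transpose_four_block_mat, insert U', auto)
  define U where "U = W * F"
  have U: "U \<in> carrier_mat ?n ?n" using W F by (simp add: U_def)
  have Ut: "transpose_mat U = transpose_mat F * transpose_mat W"
    unfolding U_def using W F by (simp add: transpose_mult[of _ ?n ?n])
  have WtW: "transpose_mat W \<in> carrier_mat ?n ?n" "transpose_mat F \<in> carrier_mat ?n ?n" using W F by auto
  have "transpose_mat U * U = (transpose_mat F * transpose_mat W) * (W * F)"
    unfolding Ut by (simp add: U_def)
  also have "\<dots> = transpose_mat F * (transpose_mat W * (W * F))"
    by (rule assoc_mult_mat[OF WtW(2) WtW(1)], insert W F, auto)
  also have "transpose_mat W * (W * F) = (transpose_mat W * W) * F"
    by (rule assoc_mult_mat[symmetric, OF WtW(1) W F])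
  also have "\<dots> = F" using WW F by simp
  also have "transpose_mat F * F = 1\<^sub>m ?n" unfolding Ft unfolding F_def
    by (subst mult_four_block_mat[of _ 1 1 _ m _ m _ _ 1 _ m], insert U' UU', auto)
  finally have UU: "transpose_mat U * U = 1\<^sub>m ?n" .
  have SWF: "S * (W * F) \<in> carrier_mat ?n ?n" "W * F \<in> carrier_mat ?n ?n" using S W F by auto
  have "transpose_mat U * S * U = (transpose_mat F * transpose_mat W) * S * (W * F)"
    unfolding Ut by (simp add: U_def)
  also have "\<dots> = transpose_mat F * (transpose_mat W * (S * (W * F)))"
  proof -
    have WtS: "transpose_mat W * S \<in> carrier_mat ?n ?n" using W S by simp
    have e1: "(transpose_mat F * transpose_mat W) * S = transpose_mat F * (transpose_mat W * S)"
      by (rule assoc_mult_mat[OF WtW(2) WtW(1) S])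
    have e2: "(transpose_mat F * (transpose_mat W * S)) * (W * F) = transpose_mat F * ((transpose_mat W * S) * (W * F))"
      by (rule assoc_mult_mat[OF WtW(2) WtS SWF(2)])
    have e3: "(transpose_mat W * S) * (W * F) = transpose_mat W * (S * (W * F))"
      by (rule assoc_mult_mat[OF WtW(1) S SWF(2)])
    show ?thesis by (simp only: e1 e2 e3)
  qed
  also have "S * (W * F) = (S * W) * F" by (rule assoc_mult_mat[symmetric, OF S W F])
  also have "transpose_mat W * ((S * W) * F) = A' * F"
  proof -
    have SW: "S * W \<in> carrier_mat ?n ?n" using S W by simp
    have "transpose_mat W * ((S * W) * F) = (transpose_mat W * (S * W)) * F"
      by (rule assoc_mult_mat[symmetric, OF WtW(1) SW F])
    also have "transpose_mat W * (S * W) = A'"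
      unfolding A'_def by (rule assoc_mult_mat[symmetric, OF WtW(1) S W])
    finally show ?thesis .
  qed
  also have "transpose_mat F * (A' * F) = transpose_mat F * A' * F"
    by (rule assoc_mult_mat[symmetric, OF WtW(2) A' F])
  also have "\<dots> = four_block_mat (mat 1 1 (\<lambda>_. \<mu>)) (0\<^sub>m 1 m) (0\<^sub>m m 1) (transpose_mat U' * A3 * U')"
    unfolding Ft unfolding F_def A'blk
    by (subst mult_four_block_mat[of _ 1 1 _ m _ m _ _ 1 _ m], insert U' A3, auto,
        subst mult_four_block_mat[of _ 1 1 _ m _ m _ _ 1 _ m], insert U' A3, auto)
  also have "\<dots> = diag_m (\<mu> # ds')" unfolding D' using diag_m_cons ds' by simp
  finally have "transpose_mat U * S * U = diag_m (\<mu> # ds')" .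
  with U UU ds' show ?case by (intro exI[of _ U] exI[of _ "\<mu> # ds'"]) auto
qed



lemma trace_comm:
  fixes A B :: "real mat"
  assumes A: "A \<in> carrier_mat n m" and B: "B \<in> carrier_mat m n"
  shows "mat_trace (A * B) = mat_trace (B * A)"
proof -
  have "mat_trace (A * B) = (\<Sum>i<n. \<Sum>j<m. A $$ (i,j) * B $$ (j,i))"
    unfolding mat_trace_def using A B
    by (auto simp: scalar_prod_def atLeast0LessThan intro!: sum.cong)
  also have "\<dots> = (\<Sum>j<m. \<Sum>i<n. B $$ (j,i) * A $$ (i,j))"
    by (subst sum.swap) (simp add: mult.commute)
  also have "\<dots> = mat_trace (B * A)"
    unfolding mat_trace_def using A B
    by (auto simp: scalar_prod_def atLeast0LessThan intro!: sum.cong)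
  finally show ?thesis .
qed

lemma proots_linear_prod: "proots (\<Prod>a\<leftarrow>ds. [:- a, 1:]) = mset (ds :: real list)"
proof (induction ds)
  case Nil then show ?case by simp
next
  case (Cons a ds)
  have nz: "(\<Prod>a\<leftarrow>ds. [:- a, 1:]) \<noteq> (0 :: real poly)"
    by (auto simp: prod_list_zero_iff)
  have "proots (\<Prod>a\<leftarrow>a # ds. [:- a, 1:]) = proots [:- a, 1:] + proots (\<Prod>a\<leftarrow>ds. [:- a, 1:])"
    by (simp only: list.map prod_list.Cons, rule proots_mult) (use nz in \<open>auto simp: prod_list_zero_iff\<close>)
  also have "proots [:- a, 1:] = {#a#}" using proots_linear_factor[of "-a"] by simp
  finally show ?case using Cons by simp
qed

lemma spectral_facts:
  fixes S :: "real mat"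
  assumes S: "S \<in> carrier_mat n n" and sym: "transpose_mat S = S"
  shows "\<exists>ds. length ds = n \<and> eig_list S = rev (sort ds) \<and> mat_trace S = sum_list ds \<and>
           (\<forall>x \<in> carrier_vec n. \<forall>ev \<in> set ds. (\<forall>e\<in>set ds. e \<le> ev) \<longrightarrow> x \<bullet> (S *\<^sub>v x) \<le> ev * (x \<bullet> x))"
proof -
  obtain U ds where U: "U \<in> carrier_mat n n" and UU: "transpose_mat U * U = 1\<^sub>m n"
    and len: "length ds = n" and D: "transpose_mat U * S * U = diag_m ds"
    using spectral[OF S sym] by blast
  have Ut: "transpose_mat U \<in> carrier_mat n n" using U by simp
  have UU2: "U * transpose_mat U = 1\<^sub>m n" by (rule mat_mult_left_right_inverse[OF Ut U UU])
  have Dc: "diag_m ds \<in> carrier_mat n n" using len by (simp add: diag_m_def)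
  have SD: "S = U * diag_m ds * transpose_mat U"
  proof -
    have "U * diag_m ds * transpose_mat U = U * (transpose_mat U * S * U) * transpose_mat U" by (simp add: D)
    also have "U * (transpose_mat U * S * U) = S * U"
    proof -
      have A: "transpose_mat U * S \<in> carrier_mat n n" using Ut S by simp
      have "U * (transpose_mat U * S * U) = (U * (transpose_mat U * S)) * U"
        by (rule assoc_mult_mat[symmetric, OF U A U])
      also have "U * (transpose_mat U * S) = (U * transpose_mat U) * S"
        by (rule assoc_mult_mat[symmetric, OF U Ut S])
      finally show ?thesis using UU2 S by simp
    qed
    also have "S * U * transpose_mat U = S * (U * transpose_mat U)"
      by (rule assoc_mult_mat[OF S U Ut])
    also have "\<dots> = S" using UU2 S by simp
    finally show ?thesis by simp
  qed
  have sim: "similar_mat S (diag_m ds)"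
    unfolding similar_mat_def similar_mat_wit_def
    by (rule exI[of _ U], rule exI[of _ "transpose_mat U"], insert S U Ut Dc UU UU2 SD, auto simp: Let_def)
  have ut: "upper_triangular (diag_m ds)" by (simp add: upper_triangular_def diag_m_def)
  have dg: "diag_mat (diag_m ds) = ds" by (rule nth_equalityI) (auto simp: diag_mat_def diag_m_def)
  have cp: "char_poly S = (\<Prod>a\<leftarrow>ds. [:- a, 1:])"
    using char_poly_similar[OF sim] char_poly_upper_triangular[OF Dc ut] dg by simp
  have el: "eig_list S = rev (sort ds)"
    unfolding eig_list_def cp proots_linear_prod by simp
  have tr: "mat_trace S = sum_list ds"
  proof -
    have DU: "diag_m ds * transpose_mat U \<in> carrier_mat n n" using Dc Ut by simp
    have "mat_trace S = mat_trace (U * (diag_m ds * transpose_mat U))"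
      using SD U Dc Ut by (simp add: assoc_mult_mat[of _ n n])
    also have "\<dots> = mat_trace ((diag_m ds * transpose_mat U) * U)" by (rule trace_comm[OF U DU])
    also have "\<dots> = mat_trace (diag_m ds)" using Dc Ut U UU by (simp add: assoc_mult_mat[of _ n n])
    also have "\<dots> = sum_list ds" using len
      by (simp add: mat_trace_def diag_m_def sum_list_sum_nth atLeast0LessThan)
    finally show ?thesis .
  qed
  have ray: "x \<bullet> (S *\<^sub>v x) \<le> ev * (x \<bullet> x)"
    if x: "x \<in> carrier_vec n" and ev: "\<forall>e\<in>set ds. e \<le> ev" for x ev
  proof -
    define y where "y = transpose_mat U *\<^sub>v x"
    have y: "y \<in> carrier_vec n" using Ut x by (simp add: y_def)
    have "S *\<^sub>v x = U *\<^sub>v (diag_m ds *\<^sub>v y)"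
    proof -
      have DU: "diag_m ds * transpose_mat U \<in> carrier_mat n n" using Dc Ut by simp
      have "S *\<^sub>v x = (U * (diag_m ds * transpose_mat U)) *\<^sub>v x"
        using SD U Dc Ut by (simp add: assoc_mult_mat[of _ n n])
      also have "\<dots> = U *\<^sub>v ((diag_m ds * transpose_mat U) *\<^sub>v x)"
        by (rule assoc_mult_mat_vec[OF U DU x])
      also have "(diag_m ds * transpose_mat U) *\<^sub>v x = diag_m ds *\<^sub>v y"
        unfolding y_def by (rule assoc_mult_mat_vec[OF Dc Ut x])
      finally show ?thesis .
    qed
    hence "x \<bullet> (S *\<^sub>v x) = y \<bullet> (diag_m ds *\<^sub>v y)"
      using transpose_vec_mult_scalar[OF U, of "diag_m ds *\<^sub>v y" x] Dc y x unfolding y_def by simp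
    also have "\<dots> = (\<Sum>i<n. ds ! i * (y $ i)^2)"
    proof -
      have inner: "(\<Sum>ia<n. (if i = ia then ds ! i else 0) * y $ ia) = ds ! i * y $ i" if "i < n" for i
        by (subst sum.cong[OF refl, of _ _ "\<lambda>ia. if ia = i then ds ! i * y $ ia else 0"]) (use that in auto)
      have "y \<bullet> (diag_m ds *\<^sub>v y) = (\<Sum>i<n. y $ i * (\<Sum>ia<n. (if i = ia then ds ! i else 0) * y $ ia))"
        using y len by (simp add: diag_m_def scalar_prod_def mult_mat_vec_def atLeast0LessThan)
      also have "\<dots> = (\<Sum>i<n. ds ! i * (y $ i)^2)"
        by (rule sum.cong) (auto simp: inner power2_eq_square)
      finally show ?thesis .
    qed
    also have "\<dots> \<le> (\<Sum>i<n. ev * (y $ i)^2)"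
      by (rule sum_mono, rule mult_right_mono, insert ev len, auto)
    also have "\<dots> = ev * (y \<bullet> y)"
      using y by (simp add: scalar_prod_def sum_distrib_left atLeast0LessThan power2_eq_square)
    also have "y \<bullet> y = x \<bullet> x"
    proof -
      have "y \<bullet> y = x \<bullet> (U *\<^sub>v y)"
        using transpose_vec_mult_scalar[OF U y x] unfolding y_def by simp
      also have "U *\<^sub>v y = x" unfolding y_def using U Ut x UU2
        by (simp add: assoc_mult_mat_vec[symmetric, of _ n n])
      finally show ?thesis .
    qed
    finally show ?thesis .
  qed
  show ?thesis using len el tr ray by blast
qed



lemma eig_facts:
  fixes S :: "real mat"
  assumes S: "S \<in> carrier_mat d d" and sym: "symmetric_mat S" and d: "d \<ge> 1"
  shows "(\<Sum>i=2..d. eig S i) = mat_trace S - eig S 1"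
    and "\<And>x. x \<in> carrier_vec d \<Longrightarrow> x \<bullet> (S *\<^sub>v x) \<le> eig S 1 * (x \<bullet> x)"
proof -
  obtain ds where len: "length ds = d" and el: "eig_list S = rev (sort ds)"
    and tr: "mat_trace S = sum_list ds"
    and ray: "\<forall>x \<in> carrier_vec d. \<forall>ev \<in> set ds. (\<forall>e\<in>set ds. e \<le> ev) \<longrightarrow> x \<bullet> (S *\<^sub>v x) \<le> ev * (x \<bullet> x)"
    using spectral_facts[OF S sym[unfolded symmetric_mat_def]] by blast
  define L where "L = rev (sort ds)"
  have lenL: "length L = d" using len by (simp add: L_def)
  have eigL: "eig S i = L ! (i - 1)" for i by (simp add: eig_def el L_def)
  have sL: "sum_list L = mat_trace S" by (simp add: L_def tr sum_list_rev) (metis mset_sort sum_mset_sum_list)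
  have "(\<Sum>i=2..d. eig S i) = (\<Sum>i=Suc 1..Suc (d - 1). L ! (i - 1))"
    using d by (simp add: eigL numeral_2_eq_2)
  also have "\<dots> = (\<Sum>j=1..d-1. L ! j)" by (subst sum.shift_bounds_cl_Suc_ivl) simp
  also have "\<dots> = (\<Sum>j=Suc 0..<d. L ! j)" using d by (intro sum.cong) auto
  also have "\<dots> = sum_list L - L ! 0"
    using sum.atLeast_Suc_lessThan[of 0 d "\<lambda>j. L ! j"] d lenL by (simp add: sum_list_sum_nth)
  finally show "(\<Sum>i=2..d. eig S i) = mat_trace S - eig S 1" using sL eigL[of 1] by simp
  have L0: "L ! 0 \<in> set ds" using lenL d by (metis L_def One_nat_def le_imp_less_Suc nth_mem
      set_rev set_sort Suc_le_eq)
  have Lmax: "e \<le> L ! 0" if "e \<in> set ds" for e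
  proof -
    have "e \<in> set (sort ds)" using that by simp
    then obtain j where j: "j < d" "sort ds ! j = e" using len by (metis in_set_conv_nth length_sort)
    have "L ! 0 = sort ds ! (d - 1)" using d len by (simp add: L_def rev_nth)
    moreover have "sort ds ! j \<le> sort ds ! (d - 1)"
      by (rule sorted_nth_mono) (use j len in auto)
    ultimately show ?thesis using j by simp
  qed
  show "x \<bullet> (S *\<^sub>v x) \<le> eig S 1 * (x \<bullet> x)" if "x \<in> carrier_vec d" for x
    using ray that L0 Lmax eigL[of 1] by auto
qed

lemma frob_expand:
  fixes S :: "real mat"
  assumes S: "S \<in> carrier_mat d d" and x: "x \<in> carrier_vec d"
  shows "frob_sq (S - (outer x + s \<cdot>\<^sub>m 1\<^sub>m d)) =
    frob_sq S + (x \<bullet> x)^2 + real d * s^2 - 2 * (x \<bullet> (S *\<^sub>v x)) - 2 * s * mat_trace S + 2 * s * (x \<bullet> x)"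
proof -
  have ent: "(S - (outer x + s \<cdot>\<^sub>m 1\<^sub>m d)) $$ (i,j) = S $$ (i,j) - x $ i * x $ j - (if i = j then s else 0)"
    if "i < d" "j < d" for i j using that S x by (simp add: outer_def)
  have dims: "dim_row (S - (outer x + s \<cdot>\<^sub>m 1\<^sub>m d)) = d" "dim_col (S - (outer x + s \<cdot>\<^sub>m 1\<^sub>m d)) = d"
    using S x by (auto simp: outer_def)
  have row: "(\<Sum>j<d. (S $$ (i,j) - x $ i * x $ j - (if i = j then s else 0))^2) =
     (\<Sum>j<d. (S $$ (i,j))^2) + (x $ i)^2 * (\<Sum>j<d. (x $ j)^2) + s^2
     - 2 * x $ i * (\<Sum>j<d. S $$ (i,j) * x $ j) - 2 * s * S $$ (i,i) + 2 * s * (x $ i)^2"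
    if i: "i < d" for i
  proof -
    have "(\<Sum>j<d. (S $$ (i,j) - x $ i * x $ j - (if i = j then s else 0))^2) =
      (\<Sum>j<d. (S $$ (i,j))^2 + (x $ i)^2 * (x $ j)^2 - 2 * x $ i * (S $$ (i,j) * x $ j)
          + (if j = i then s^2 - 2 * s * S $$ (i,i) + 2 * s * (x $ i)^2 else 0))"
      by (rule sum.cong) (auto simp: power2_eq_square algebra_simps)
    also have "\<dots> = (\<Sum>j<d. (S $$ (i,j))^2) + (x $ i)^2 * (\<Sum>j<d. (x $ j)^2)
          - 2 * x $ i * (\<Sum>j<d. S $$ (i,j) * x $ j) + (s^2 - 2 * s * S $$ (i,i) + 2 * s * (x $ i)^2)"
      using i by (simp add: sum.distrib sum_subtractf sum_distrib_left)
    finally show ?thesis by simp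
  qed
  have "frob_sq (S - (outer x + s \<cdot>\<^sub>m 1\<^sub>m d)) = (\<Sum>i<d. \<Sum>j<d. (S $$ (i,j) - x $ i * x $ j - (if i = j then s else 0))^2)"
    unfolding frob_sq_def dims by (intro sum.cong refl, subst ent, auto)
  also have "\<dots> = (\<Sum>i<d. (\<Sum>j<d. (S $$ (i,j))^2) + (x $ i)^2 * (\<Sum>j<d. (x $ j)^2) + s^2
     - 2 * x $ i * (\<Sum>j<d. S $$ (i,j) * x $ j) - 2 * s * S $$ (i,i) + 2 * s * (x $ i)^2)"
    by (rule sum.cong) (simp_all add: row)
  also have "\<dots> = frob_sq S + (\<Sum>i<d. (x $ i)^2) * (\<Sum>j<d. (x $ j)^2) + real d * s^2
     - 2 * (\<Sum>i<d. x $ i * (\<Sum>j<d. S $$ (i,j) * x $ j)) - 2 * s * mat_trace S + 2 * s * (\<Sum>i<d. (x $ i)^2)"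
    using S by (simp add: sum.distrib sum_subtractf sum_distrib_left sum_distrib_right frob_sq_def mat_trace_def
        mult.assoc) (rule sum.swap)
  also have "(\<Sum>i<d. (x $ i)^2) = x \<bullet> x" using x by (simp add: scalar_prod_def power2_eq_square atLeast0LessThan)
  also have "(\<Sum>i<d. x $ i * (\<Sum>j<d. S $$ (i,j) * x $ j)) = x \<bullet> (S *\<^sub>v x)"
    using x S by (simp add: scalar_prod_def mult_mat_vec_def atLeast0LessThan mult.commute)
  finally show ?thesis by (simp add: power2_eq_square)
qed



theorem lemma7:
  fixes d K :: nat and S :: "nat \<Rightarrow> real mat" and v :: "nat \<Rightarrow> real vec"
  assumes "d \<ge> 2"
    and "K \<ge> 1"
    and carrier: "\<And>k. k < K \<Longrightarrow> S k \<in> carrier_mat d d"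
    and sym: "\<And>k. k < K \<Longrightarrow> symmetric_mat (S k)"
    and psd: "\<And>k. k < K \<Longrightarrow> psd_mat (S k)"
    and cond: "\<And>j. j < K \<Longrightarrow>
       eig (S j) 1 \<ge> (\<Sum>k<K. \<Sum>i=2..d. eig (S k) i) / (real K * (real d - 1))"
    and v_eig: "\<And>k. k < K \<Longrightarrow> eigenvector (S k) (v k) (eig (S k) 1)"
    and v_unit: "\<And>k. k < K \<Longrightarrow> v k \<bullet> v k = 1"
  defines "\<sigma> \<equiv> (1 / real K) * (\<Sum>k<K. (mat_trace (S k) - eig (S k) 1) / (real d - 1))"
  defines "xg \<equiv> (\<lambda>k. sqrt (eig (S k) 1 - \<sigma>) \<cdot>\<^sub>v v k)"
  shows "\<forall>(x :: nat \<Rightarrow> real vec) (s :: real).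
           (\<forall>k<K. x k \<in> carrier_vec d) \<longrightarrow> gmm_obj d K S xg \<sigma> \<le> gmm_obj d K S x s"
proof (intro allI impI)
  fix x :: "nat \<Rightarrow> real vec" and s :: real
  assume xc: "\<forall>k<K. x k \<in> carrier_vec d"
  define a where "a k = eig (S k) 1" for k
  define T where "T k = mat_trace (S k)" for k
  define Q where "Q k = frob_sq (S k)" for k
  define h where "h k t = Q k + real d * t^2 - 2 * t * T k - (a k - t)^2" for k t
  have d1: "real d - 1 > 0" using assms(1) by simp
  have K0: "real K > 0" using assms(2) by simp
  have E: "(\<Sum>k<K. T k - a k) = real K * (real d - 1) * \<sigma>"
    unfolding \<sigma>_def T_def a_def using d1 K0 by (simp add: sum_divide_distrib[symmetric] field_simps)
  have ef1: "(\<Sum>i=2..d. eig (S k) i) = T k - a k" if "k < K" for k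
    using eig_facts(1)[OF carrier[OF that] sym[OF that]] assms(1) by (simp add: T_def a_def)
  have ef2: "y \<bullet> (S k *\<^sub>v y) \<le> a k * (y \<bullet> y)" if "k < K" "y \<in> carrier_vec d" for k y
    using eig_facts(2)[OF carrier[OF that(1)] sym[OF that(1)] _ that(2)] assms(1) by (simp add: a_def)
  have a\<sigma>: "\<sigma> \<le> a k" if "k < K" for k
  proof -
    have "(\<Sum>k<K. \<Sum>i=2..d. eig (S k) i) = (\<Sum>k<K. T k - a k)" by (rule sum.cong) (simp_all add: ef1)
    hence "(\<Sum>k<K. \<Sum>i=2..d. eig (S k) i) / (real K * (real d - 1)) = \<sigma>" using E d1 K0 by simp
    thus ?thesis using cond[OF that] by (simp add: a_def)
  qed
  have low: "h k s \<le> frob_sq (S k - (outer (x k) + s \<cdot>\<^sub>m 1\<^sub>m d))" if k: "k < K" for k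
  proof -
    have xk: "x k \<in> carrier_vec d" using xc k by simp
    define t where "t = x k \<bullet> x k"
    have r: "x k \<bullet> (S k *\<^sub>v x k) \<le> a k * t" using ef2[OF k xk] by (simp add: t_def)
    have sq: "0 \<le> (t - (a k - s))^2" by simp
    have sqe: "(t - (a k - s))^2 = t^2 - 2 * a k * t + 2 * s * t + (a k - s)^2" by (simp add: power2_eq_square algebra_simps)
    have nn: "0 \<le> t^2 - 2 * a k * t + 2 * s * t + (a k - s)^2" using sq sqe by simp
    show ?thesis unfolding frob_expand[OF carrier[OF k] xk] h_def t_def[symmetric] Q_def T_def
      using r nn by linarith
  qed
  have eq: "frob_sq (S k - (outer (xg k) + \<sigma> \<cdot>\<^sub>m 1\<^sub>m d)) = h k \<sigma>" if k: "k < K" for k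
  proof -
    have vk: "v k \<in> carrier_vec d" and Sv: "S k *\<^sub>v v k = a k \<cdot>\<^sub>v v k"
      using v_eig[OF k] carrier[OF k] unfolding eigenvector_def a_def by auto
    define c where "c = a k - \<sigma>"
    have c0: "c \<ge> 0" using a\<sigma>[OF k] by (simp add: c_def)
    have xgk: "xg k = sqrt c \<cdot>\<^sub>v v k" by (simp add: xg_def c_def a_def)
    have xgc: "xg k \<in> carrier_vec d" using vk by (simp add: xgk)
    have t: "xg k \<bullet> xg k = c" using vk v_unit[OF k] c0
      by (simp add: xgk)
    have r: "xg k \<bullet> (S k *\<^sub>v xg k) = c * a k"
    proof -
      have "S k *\<^sub>v xg k = (sqrt c * a k) \<cdot>\<^sub>v v k" using carrier[OF k] vk Sv
        by (simp add: xgk mult_mat_vec smult_smult_assoc)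
      hence "xg k \<bullet> (S k *\<^sub>v xg k) = sqrt c * (sqrt c * a k) * (v k \<bullet> v k)"
        using vk by (simp add: xgk mult.assoc)
      thus ?thesis using v_unit[OF k] c0 by (simp add: mult.assoc[symmetric])
    qed
    show ?thesis unfolding frob_expand[OF carrier[OF k] xgc] h_def t r
      by (simp add: Q_def T_def c_def power2_eq_square algebra_simps)
  qed
  have "gmm_obj d K S xg \<sigma> = (\<Sum>k<K. h k \<sigma>)" unfolding gmm_obj_def by (rule sum.cong) (simp_all add: eq)
  also have "\<dots> \<le> (\<Sum>k<K. h k s)"
  proof -
    have "(\<Sum>k<K. h k s) - (\<Sum>k<K. h k \<sigma>) = (\<Sum>k<K. (real d - 1) * (s^2 - \<sigma>^2) - 2 * (s - \<sigma>) * (T k - a k))"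
      unfolding sum_subtractf[symmetric] by (rule sum.cong) (simp_all add: h_def power2_eq_square algebra_simps)
    also have "\<dots> = real K * (real d - 1) * (s^2 - \<sigma>^2) - 2 * (s - \<sigma>) * (\<Sum>k<K. T k - a k)"
      by (simp add: sum_subtractf sum_distrib_left[symmetric])
    also have "\<dots> = real K * (real d - 1) * (s - \<sigma>)^2" unfolding E by (simp add: power2_eq_square algebra_simps)
    also have "\<dots> \<ge> 0" using d1 K0 by simp
    finally show ?thesis by simp
  qed
  also have "\<dots> \<le> gmm_obj d K S x s" unfolding gmm_obj_def by (rule sum_mono) (simp add: low)
  finally show "gmm_obj d K S xg \<sigma> \<le> gmm_obj d K S x s" .
qed


end
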